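(* Let $\lambda=(\lambda_1,\dots,\lambda_n)\in\mathbb Z^n$ with $\lambda_1>\lambda_2>\cdots>\lambda_n$ (all entries distinct and decreasing). Write the Schur $P$-Laurent polynomial as $P_\lambda=\sum_\mu g_{\mu\lambda}s_\mu$, the sum over generalized partitions $\mu$ of length $n$. Then $g_{0\lambda}=1$ if $\lambda=2\rho$, and $g_{0\lambda}=0$ otherwise, where $2\rho=(n-1,n-3,\dots,-(n-1))$, i.e. $(2\rho)_i=n-2i+1$.
   Context: A generalized partition of length $n$ is $\mu=(\mu_1\ge\cdots\ge\mu_n)\in\mathbb Z^n$; its Schur Laurent polynomial is $s_\mu=\sum_{w\in\mathfrak S_n}w\bigl(x_1^{\mu_1+n-1}x_2^{\mu_2+n-2}\cdots x_n^{\mu_n}\prod_{i<j}(x_i-x_j)^{-1}\bigr)$, where $\mathfrak S_n$ permutes the variables; these form a basis of the symmetric Laurent polynomials in $x_1,\dots,x_n$, and $s_0=1$. For $\lambda\in\mathbb Z^n$ with strictly decreasing entries, $P_\lambda=\sum_{w\in\mathfrak S_n}w\bigl(x_1^{\lambda_1}\cdots x_n^{\lambda_n}\prod_{i<j}\frac{x_i+x_j}{x_i-x_j}\bigr)$. *)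

theory Defs
  imports Complex_Main "HOL-Combinatorics.Permutations"
begin

text \<open>Laurent polynomials in x_0,...,x_{n-1} are represented by their values on the
  Zariski-dense set of points with nonzero, pairwise distinct complex coordinates.
  Index vectors (lambda, mu) are int lists of length n, 0-indexed.\<close>

definition good_point :: "nat \<Rightarrow> (nat \<Rightarrow> complex) \<Rightarrow> bool" where
  "good_point n x \<longleftrightarrow> (\<forall>i<n. x i \<noteq> 0) \<and> (\<forall>i<n. \<forall>j<n. i \<noteq> j \<longrightarrow> x i \<noteq> x j)"

definition gen_partition :: "nat \<Rightarrow> int list \<Rightarrow> bool" where
  "gen_partition n mu \<longleftrightarrow> length mu = n \<and> sorted_wrt (\<ge>) mu"

definition strict_decr :: "nat \<Rightarrow> int list \<Rightarrow> bool" where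
  "strict_decr n lam \<longleftrightarrow> length lam = n \<and> sorted_wrt (>) lam"

definition schur_s :: "nat \<Rightarrow> int list \<Rightarrow> (nat \<Rightarrow> complex) \<Rightarrow> complex" where
  "schur_s n mu x = (\<Sum>w | w permutes {..<n}.
     (\<Prod>i<n. x (w i) powi (mu ! i + int n - 1 - int i)) /
     (\<Prod>i<n. \<Prod>j\<in>{i<..<n}. (x (w i) - x (w j))))"

definition schur_P :: "nat \<Rightarrow> int list \<Rightarrow> (nat \<Rightarrow> complex) \<Rightarrow> complex" where
  "schur_P n lam x = (\<Sum>w | w permutes {..<n}.
     (\<Prod>i<n. x (w i) powi (lam ! i)) *
     (\<Prod>i<n. \<Prod>j\<in>{i<..<n}. (x (w i) + x (w j)) / (x (w i) - x (w j))))"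

definition two_rho :: "nat \<Rightarrow> int list" where
  "two_rho n = map (\<lambda>i. int n - 2 * int i - 1) [0..<n]"

definition is_schur_expansion :: "nat \<Rightarrow> int list \<Rightarrow> (int list \<Rightarrow> complex) \<Rightarrow> bool" where
  "is_schur_expansion n lam g \<longleftrightarrow>
     finite {mu. g mu \<noteq> 0} \<and> (\<forall>mu. g mu \<noteq> 0 \<longrightarrow> gen_partition n mu) \<and>
     (\<forall>x. good_point n x \<longrightarrow> schur_P n lam x = (\<Sum>mu | g mu \<noteq> 0. g mu * schur_s n mu x))"

end

theory Submission
  imports Defs "Jordan_Normal_Form.Determinant" "HOL-Library.FuncSet"
begin


definition vd :: "nat \<Rightarrow> (nat \<Rightarrow> complex) \<Rightarrow> complex" where
  "vd n x = (\<Prod>i<n. \<Prod>j\<in>{i<..<n}. (x i - x j))"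

lemma vd_Suc: "vd (Suc n) y = vd n y * (\<Prod>i<n. (y i - y n))"
proof -
  have "vd (Suc n) y = (\<Prod>i<n. \<Prod>j\<in>{i<..<Suc n}. (y i - y j))"
  proof -
    have "{n<..<Suc n} = {}" by auto
    thus ?thesis by (simp add: vd_def lessThan_Suc)
  qed
  also have "\<dots> = (\<Prod>i<n. (y i - y n) * (\<Prod>j\<in>{i<..<n}. (y i - y j)))"
  proof (rule prod.cong[OF refl])
    fix i assume "i \<in> {..<n}"
    hence "{i<..<Suc n} = insert n {i<..<n}" by auto
    thus "(\<Prod>j\<in>{i<..<Suc n}. (y i - y j)) = (y i - y n) * (\<Prod>j\<in>{i<..<n}. (y i - y j))"
      by simp
  qed
  also have "\<dots> = vd n y * (\<Prod>i<n. (y i - y n))"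
    by (simp add: vd_def prod.distrib mult.commute)
  finally show ?thesis .
qed

lemma det_rowscale:
  fixes d :: "nat \<Rightarrow> complex"
  shows "det (mat n n (\<lambda>(i,j). d i * f i j)) = (\<Prod>i<n. d i) * det (mat n n (\<lambda>(i,j). f i j))"
proof -
  have "det (mat n n (\<lambda>(i,j). d i * f i j)) =
     (\<Sum>p\<in>{p. p permutes {0..<n}}. signof p * (\<Prod>i = 0..<n. d i * f i (p i)))"
    by (subst det_def'[of _ n]) (auto intro!: sum.cong prod.cong simp: permutes_in_image)
  also have "\<dots> = (\<Sum>p\<in>{p. p permutes {0..<n}}. (\<Prod>i<n. d i) * (signof p * (\<Prod>i = 0..<n. f i (p i))))"
    by (auto intro!: sum.cong simp: prod.distrib atLeast0LessThan)
  also have "\<dots> = (\<Prod>i<n. d i) * det (mat n n (\<lambda>(i,j). f i j))"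
    by (subst det_def'[of _ n]) (auto intro!: sum.cong prod.cong simp: permutes_in_image sum_distrib_left)
  finally show ?thesis .
qed

lemma vandermonde:
  fixes y :: "nat \<Rightarrow> complex"
  shows "det (mat n n (\<lambda>(i,j). y i ^ (n - 1 - j))) = vd n y"
proof (induction n)
  case 0
  show ?case by (simp add: vd_def det_def)
next
  case (Suc n)
  define A :: "complex mat" where "A = mat (Suc n) (Suc n) (\<lambda>(i,j). y i ^ (Suc n - 1 - j))"
  define U :: "complex mat" where "U = mat (Suc n) (Suc n) (\<lambda>(i,j). if i = j then 1 else if i = Suc j then - y n else 0)"
  have A: "A \<in> carrier_mat (Suc n) (Suc n)" by (simp add: A_def)
  have U: "U \<in> carrier_mat (Suc n) (Suc n)" by (simp add: U_def)
  have dU: "det U = 1"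
  proof -
    have "det U = prod_list (diag_mat U)"
      by (rule det_lower_triangular[OF _ U]) (auto simp: U_def)
    also have "diag_mat U = map (\<lambda>i. 1) [0..<Suc n]"
      by (auto simp: diag_mat_def U_def)
    finally show ?thesis by (simp del: upt_Suc add: map_replicate_const)
  qed
  define B where "B = A * U"
  have B: "B \<in> carrier_mat (Suc n) (Suc n)" using A U by (simp add: B_def)
  have dB: "det B = det A" using det_mult[OF A U] dU by (simp add: B_def)
  have Bent: "B $$ (i,j) = (if j = n then 1 else y i ^ (n - 1 - j) * (y i - y n))"
    if i: "i < Suc n" and j: "j < Suc n" for i j
  proof -
    have "B $$ (i,j) = (\<Sum>k\<in>{0..<Suc n}. A $$ (i,k) * U $$ (k,j))"
      using A U i j by (simp add: B_def scalar_prod_def)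
    also have "\<dots> = (\<Sum>k\<in>{0..<Suc n}. (if k = j then A $$ (i,k) else 0) +
                       (if k = Suc j then - y n * A $$ (i,k) else 0))"
      by (rule sum.cong[OF refl]) (auto simp: U_def j)
    also have "\<dots> = A $$ (i,j) + (if Suc j < Suc n then - y n * A $$ (i, Suc j) else 0)"
      using j by (cases "j = n") (auto simp: sum.distrib)
    also have "\<dots> = (if j = n then 1 else y i ^ (n - 1 - j) * (y i - y n))"
    proof (cases "j = n")
      case True thus ?thesis using i by (simp add: A_def)
    next
      case False
      hence "n - j = Suc (n - 1 - j)" using j by auto
      thus ?thesis using False i j by (simp add: A_def algebra_simps)
    qed
    finally show ?thesis .
  qed
  have "det B = (\<Sum>j<Suc n. B $$ (n,j) * cofactor B n j)"
    by (rule laplace_expansion_row[OF B]) simp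
  also have "\<dots> = (\<Sum>j<Suc n. if j = n then cofactor B n j else 0)"
    by (rule sum.cong[OF refl]) (auto simp: Bent)
  also have "\<dots> = cofactor B n n" by simp
  also have "\<dots> = det (mat_delete B n n)"
    by (simp add: cofactor_def)
  also have "mat_delete B n n = mat n n (\<lambda>(i,j). (y i - y n) * y i ^ (n - 1 - j))"
    using B by (auto simp: mat_delete_def Bent)
  also have "det \<dots> = (\<Prod>i<n. (y i - y n)) * vd n y"
    using det_rowscale[where d="\<lambda>i. y i - y n" and f="\<lambda>i j. y i ^ (n - 1 - j)" and n=n] Suc.IH by simp
  finally show ?case using dB by (simp add: A_def vd_Suc mult.commute)
qed



definition pw :: "nat \<Rightarrow> (nat \<Rightarrow> complex) \<Rightarrow> (nat \<Rightarrow> int) \<Rightarrow> (nat \<Rightarrow> nat) \<Rightarrow> complex" where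
  "pw n x b w = (\<Prod>i<n. x (w i) powi b i)"

definition alt :: "nat \<Rightarrow> (nat \<Rightarrow> int) \<Rightarrow> (nat \<Rightarrow> complex) \<Rightarrow> complex" where
  "alt n b x = (\<Sum>w | w permutes {..<n}. of_int (sign w) * pw n x b w)"

definition dl :: "nat \<Rightarrow> nat \<Rightarrow> int" where "dl n i = int n - 1 - int i"

definition ev :: "nat \<Rightarrow> (nat \<Rightarrow> complex) \<Rightarrow> complex" where
  "ev n x = (\<Prod>i<n. \<Prod>j\<in>{i<..<n}. (x i + x j))"

lemma sign_sq: "(of_int (sign w) :: complex) * of_int (sign w) = 1"
  by (simp add: sign_def)

lemma vd_det: "vd n y = det (mat n n (\<lambda>(i,j). y i ^ (n - 1 - j)))"
  using vandermonde by simp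

lemma alt_dl: "alt n (dl n) y = vd n y"
proof -
  define V where "V = mat n n (\<lambda>(i,j). y i ^ (n - 1 - j))"
  have V: "V \<in> carrier_mat n n" by (simp add: V_def)
  have "vd n y = det (transpose_mat V)" using det_transpose[OF V] vd_det by (simp add: V_def)
  also have "\<dots> = (\<Sum>p\<in>{p. p permutes {0..<n}}. signof p * (\<Prod>i = 0..<n. transpose_mat V $$ (i, p i)))"
    using V by (intro det_def') simp
  also have "\<dots> = alt n (dl n) y"
    unfolding alt_def pw_def
  proof (rule sum.cong)
    show "{p. p permutes {0..<n}} = {w. w permutes {..<n}}" by (simp add: atLeast0LessThan)
  next
    fix p assume "p \<in> {w. w permutes {..<n}}"
    hence p: "p permutes {..<n}" by simp
    have "(\<Prod>i = 0..<n. transpose_mat V $$ (i, p i)) = (\<Prod>i<n. y (p i) powi dl n i)"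
    proof (rule prod.cong)
      show "{0..<n} = {..<n}" by (simp add: atLeast0LessThan)
    next
      fix i assume i: "i \<in> {..<n}"
      hence pi: "p i < n" using permutes_in_image[OF p] by simp
      have "dl n i = int (n - 1 - i)" using i by (simp add: dl_def of_nat_diff)
      hence "y (p i) powi dl n i = y (p i) ^ (n - 1 - i)" by (simp only: power_int_of_nat)
      moreover have "transpose_mat V $$ (i, p i) = y (p i) ^ (n - 1 - i)"
        using i pi V by (simp add: V_def)
      ultimately show "transpose_mat V $$ (i, p i) = y (p i) powi dl n i" by simp
    qed
    thus "signof p * (\<Prod>i = 0..<n. transpose_mat V $$ (i, p i)) = of_int (sign p) * (\<Prod>i<n. y (p i) powi dl n i)"
      by simp
  qed
  finally show ?thesis by simp
qed

lemma vd_perm: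
  assumes w: "w permutes {..<n}"
  shows "vd n (y \<circ> w) = of_int (sign w) * vd n y"
proof -
  define V where "V = mat n n (\<lambda>(i,j). y i ^ (n - 1 - j))"
  have V: "V \<in> carrier_mat n n" by (simp add: V_def)
  have w0: "w permutes {0..<n}" using w by (simp add: atLeast0LessThan)
  have "mat n n (\<lambda>(i,j). V $$ (w i, j)) = mat n n (\<lambda>(i,j). (y \<circ> w) i ^ (n - 1 - j))"
  proof (rule eq_matI)
    fix i j assume "i < dim_row (mat n n (\<lambda>(i,j). (y \<circ> w) i ^ (n - 1 - j)))"
       "j < dim_col (mat n n (\<lambda>(i,j). (y \<circ> w) i ^ (n - 1 - j)))"
    hence i: "i < n" and j: "j < n" by auto
    have wi: "w i < n" using permutes_in_image[OF w] i by simp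
    show "mat n n (\<lambda>(i,j). V $$ (w i, j)) $$ (i,j) = mat n n (\<lambda>(i,j). (y \<circ> w) i ^ (n - 1 - j)) $$ (i,j)"
      using i j wi by (simp add: V_def)
  qed simp_all
  hence "vd n (y \<circ> w) = det (mat n n (\<lambda>(i,j). V $$ (w i, j)))" by (simp add: vd_det)
  also have "\<dots> = signof w * det V" by (rule det_permute_rows[OF V w0])
  finally show ?thesis by (simp add: V_def vd_det)
qed

lemma good_vd: "good_point n x \<Longrightarrow> vd n x \<noteq> 0"
  by (auto simp: good_point_def vd_def)

lemma good_perm:
  assumes "good_point n x" "w permutes {..<n}"
  shows "good_point n (x \<circ> w)"
proof -
  have a: "\<And>i. i < n \<Longrightarrow> w i < n" using permutes_in_image[OF assms(2)] by simp
  have b: "\<And>i j. w i = w j \<Longrightarrow> i = j" using permutes_inj[OF assms(2)] by (simp add: inj_def)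
  show ?thesis unfolding good_point_def
  proof (intro conjI allI impI)
    fix i assume "i < n" thus "(x \<circ> w) i \<noteq> 0" using assms(1) a unfolding good_point_def by simp
  next
    fix i j assume "i < n" "j < n" "i \<noteq> j"
    thus "(x \<circ> w) i \<noteq> (x \<circ> w) j" using assms(1) a b unfolding good_point_def o_def by blast
  qed
qed

lemma prod_pair_comp: "(\<Prod>i<n. \<Prod>j\<in>{i<..<n}. f (x (w i)) (x (w j))) = (\<Prod>i<n. \<Prod>j\<in>{i<..<n}. f ((x \<circ> w) i) ((x \<circ> w) j))"
  by simp

lemma s_alt:
  assumes g: "good_point n x"
  shows "schur_s n mu x = alt n (\<lambda>i. mu ! i + dl n i) x / vd n x"
proof -
  have "schur_s n mu x = (\<Sum>w | w permutes {..<n}. of_int (sign w) * pw n x (\<lambda>i. mu ! i + dl n i) w / vd n x)"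
    unfolding schur_s_def
  proof (rule sum.cong[OF refl])
    fix w assume "w \<in> {w. w permutes {..<n}}"
    hence w: "w permutes {..<n}" by simp
    have "(\<Prod>i<n. \<Prod>j\<in>{i<..<n}. (x (w i) - x (w j))) = vd n (x \<circ> w)" by (simp add: vd_def)
    also have "\<dots> = of_int (sign w) * vd n x" by (rule vd_perm[OF w])
    finally have d: "(\<Prod>i<n. \<Prod>j\<in>{i<..<n}. (x (w i) - x (w j))) = of_int (sign w) * vd n x" .
    have e: "(\<Prod>i<n. x (w i) powi (mu ! i + int n - 1 - int i)) = pw n x (\<lambda>i. mu ! i + dl n i) w"
      by (simp add: pw_def dl_def algebra_simps)
    have s: "(of_int (sign w) :: complex) = 1 \<or> of_int (sign w) = -1" by (simp add: sign_def)
    show "(\<Prod>i<n. x (w i) powi (mu ! i + int n - 1 - int i)) / (\<Prod>i<n. \<Prod>j\<in>{i<..<n}. (x (w i) - x (w j))) =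
          of_int (sign w) * pw n x (\<lambda>i. mu ! i + dl n i) w / vd n x"
      unfolding d e by (cases "evenperm w") (simp_all add: sign_def divide_simps)
  qed
  also have "\<dots> = alt n (\<lambda>i. mu ! i + dl n i) x / vd n x"
    by (simp add: alt_def sum_divide_distrib)
  finally show ?thesis .
qed

lemma ev_vd: "ev n x * vd n x = vd n (\<lambda>i. x i ^ 2)"
proof -
  have "ev n x * vd n x = (\<Prod>i<n. \<Prod>j\<in>{i<..<n}. (x i + x j) * (x i - x j))"
    by (simp add: ev_def vd_def prod.distrib)
  also have "\<dots> = vd n (\<lambda>i. x i ^ 2)"
    unfolding vd_def by (intro prod.cong refl) (simp add: power2_eq_square algebra_simps)
  finally show ?thesis .
qed

lemma ev_perm:
  assumes g: "good_point n x" and w: "w permutes {..<n}"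
  shows "ev n (x \<circ> w) = ev n x"
proof -
  have "ev n (x \<circ> w) * vd n (x \<circ> w) = vd n ((\<lambda>i. x i ^ 2) \<circ> w)"
    using ev_vd[of n "x \<circ> w"] by (simp add: o_def)
  also have "\<dots> = of_int (sign w) * (ev n x * vd n x)" by (simp add: vd_perm[OF w] ev_vd)
  finally have "ev n (x \<circ> w) * (of_int (sign w) * vd n x) = ev n x * (of_int (sign w) * vd n x)"
    by (simp add: vd_perm[OF w] algebra_simps)
  moreover have "of_int (sign w) * vd n x \<noteq> 0" using good_vd[OF g] by (simp add: sign_def)
  ultimately show ?thesis by simp
qed

lemma P_alt:
  assumes g: "good_point n x"
  shows "schur_P n lam x = ev n x / vd n x * alt n (\<lambda>i. lam ! i) x"
proof -
  have "schur_P n lam x = (\<Sum>w | w permutes {..<n}. ev n x / vd n x * (of_int (sign w) * pw n x (\<lambda>i. lam ! i) w))"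
    unfolding schur_P_def
  proof (rule sum.cong[OF refl])
    fix w assume "w \<in> {w. w permutes {..<n}}"
    hence w: "w permutes {..<n}" by simp
    have "(\<Prod>i<n. \<Prod>j\<in>{i<..<n}. (x (w i) + x (w j)) / (x (w i) - x (w j))) = ev n (x \<circ> w) / vd n (x \<circ> w)"
      by (simp add: ev_def vd_def prod_dividef)
    also have "\<dots> = ev n x / (of_int (sign w) * vd n x)" by (simp add: vd_perm[OF w] ev_perm[OF g w])
    finally have d: "(\<Prod>i<n. \<Prod>j\<in>{i<..<n}. (x (w i) + x (w j)) / (x (w i) - x (w j))) = ev n x / (of_int (sign w) * vd n x)" .
    have s: "(of_int (sign w) :: complex) = 1 \<or> of_int (sign w) = -1" by (simp add: sign_def)
    show "(\<Prod>i<n. x (w i) powi lam ! i) * (\<Prod>i<n. \<Prod>j\<in>{i<..<n}. (x (w i) + x (w j)) / (x (w i) - x (w j))) =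
         ev n x / vd n x * (of_int (sign w) * pw n x (\<lambda>i. lam ! i) w)"
      unfolding d by (cases "evenperm w") (simp_all add: sign_def pw_def divide_simps)
  qed
  also have "\<dots> = ev n x / vd n x * alt n (\<lambda>i. lam ! i) x"
    by (simp add: alt_def sum_distrib_left)
  finally show ?thesis .
qed



definition mon :: "nat \<Rightarrow> (nat \<Rightarrow> int) \<Rightarrow> (nat \<Rightarrow> complex) \<Rightarrow> complex" where
  "mon n e x = (\<Prod>i<n. x i powi e i)"

definition pt :: "nat \<Rightarrow> (nat \<Rightarrow> nat) \<Rightarrow> nat \<Rightarrow> complex" where
  "pt M k i = of_nat (Suc i) * cis (2 * pi / real M) ^ (k i)"

definition ct :: "nat \<Rightarrow> nat \<Rightarrow> ((nat \<Rightarrow> complex) \<Rightarrow> complex) \<Rightarrow> complex" where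
  "ct n M F = (\<Sum>k\<in>PiE {..<n} (\<lambda>_. {..<M}). F (pt M k)) / of_nat M ^ n"

lemma norm_pt: "norm (pt M k i) = real (Suc i)"
  by (simp add: pt_def norm_mult norm_power norm_of_nat del: of_nat_Suc)

lemma pt_good: "good_point n (pt M k)"
  unfolding good_point_def
proof (intro conjI allI impI)
  fix i assume "i < n"
  have "norm (pt M k i) \<noteq> 0" by (simp add: norm_pt)
  thus "pt M k i \<noteq> 0" by auto
next
  fix i j :: nat assume "i \<noteq> j"
  hence "norm (pt M k i) \<noteq> norm (pt M k j)" by (simp add: norm_pt)
  thus "pt M k i \<noteq> pt M k j" by auto
qed

lemma ct_cong:
  assumes "\<And>x. good_point n x \<Longrightarrow> F x = G x"
  shows "ct n M F = ct n M G"
  unfolding ct_def using assms pt_good by simp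

lemma ct_sum: "finite A \<Longrightarrow> ct n M (\<lambda>x. \<Sum>a\<in>A. f a x) = (\<Sum>a\<in>A. ct n M (f a))"
  unfolding ct_def by (simp add: sum.swap[of _ A] sum_divide_distrib)

lemma ct_cmult: "ct n M (\<lambda>x. c * F x) = c * ct n M F"
  unfolding ct_def by (simp add: sum_distrib_left)

lemma root_sum:
  fixes e :: int
  assumes M: "M > 0" and e: "\<bar>e\<bar> < int M"
  shows "(\<Sum>j<M. (cis (2 * pi / real M) ^ j) powi e) = (if e = 0 then of_nat M else 0)"
proof (cases "e = 0")
  case True thus ?thesis by simp
next
  case False
  define z where "z = cis (2 * pi * real_of_int e / real M)"
  have zj: "(cis (2 * pi / real M) ^ j) powi e = z ^ j" for j
    by (simp add: z_def DeMoivre cis_power_int algebra_simps)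
  have zM: "z ^ M = 1"
  proof -
    have "z ^ M = cis (2 * pi * real_of_int e)" using M by (simp add: z_def DeMoivre)
    also have "\<dots> = 1" by (rule cis_multiple_2pi) simp
    finally show ?thesis .
  qed
  have z1: "z \<noteq> 1"
  proof
    assume "z = 1"
    hence "cos (2 * pi * real_of_int e / real M) = 1"
      by (metis cis.sel(1) one_complex.sel(1) z_def)
    then obtain m :: int where m: "2 * pi * real_of_int e / real M = real_of_int m * 2 * pi"
      using cos_one_2pi_int by blast
    hence "real_of_int e = real_of_int m * real M" using M by (simp add: field_simps)
    hence em: "e = m * int M" by (metis of_int_eq_iff of_int_mult of_int_of_nat_eq)
    show False
    proof (cases "m = 0")
      case True thus False using em False by simp
    next
      case False
      hence "\<bar>m * int M\<bar> \<ge> int M" using M by (simp add: abs_mult mult_le_cancel_right1)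
      thus False using em e by simp
    qed
  qed
  have "(\<Sum>j<M. (cis (2 * pi / real M) ^ j) powi e) = (\<Sum>j<M. z ^ j)" by (simp add: zj)
  also have "\<dots> = 0" using z1 zM by (simp add: sum_gp_strict)
  finally show ?thesis using False by simp
qed

lemma ct_mono:
  assumes M: "M > 0" and e: "\<And>i. i < n \<Longrightarrow> \<bar>e i\<bar> < int M"
  shows "ct n M (mon n e) = (if \<forall>i<n. e i = 0 then 1 else 0)"
proof -
  have "(\<Sum>k\<in>PiE {..<n} (\<lambda>_. {..<M}). mon n e (pt M k)) =
        (\<Sum>k\<in>PiE {..<n} (\<lambda>_. {..<M}). \<Prod>i<n. (of_nat (Suc i) * cis (2 * pi / real M) ^ (k i)) powi e i)"
    by (simp add: mon_def pt_def)
  also have "\<dots> = (\<Prod>i<n. \<Sum>j<M. (of_nat (Suc i) * cis (2 * pi / real M) ^ j) powi e i)"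
    by (rule prod_sum_PiE[symmetric]) auto
  also have "\<dots> = (\<Prod>i<n. of_nat (Suc i) powi e i * (if e i = 0 then of_nat M else 0))"
  proof (rule prod.cong[OF refl])
    fix i assume i: "i \<in> {..<n}"
    have "(\<Sum>j<M. (of_nat (Suc i) * cis (2 * pi / real M) ^ j) powi e i) =
          of_nat (Suc i) powi e i * (\<Sum>j<M. (cis (2 * pi / real M) ^ j) powi e i)"
      by (simp add: power_int_mult_distrib sum_distrib_left)
    also have "\<dots> = of_nat (Suc i) powi e i * (if e i = 0 then of_nat M else 0)"
      using root_sum[OF M e] i by simp
    finally show "(\<Sum>j<M. (of_nat (Suc i) * cis (2 * pi / real M) ^ j) powi e i) =
          of_nat (Suc i) powi e i * (if e i = 0 then of_nat M else 0)" .
  qed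
  also have "\<dots> = (if \<forall>i<n. e i = 0 then of_nat M ^ n else 0)"
  proof (cases "\<forall>i<n. e i = 0")
    case True thus ?thesis by simp
  next
    case False
    then obtain i where "i < n" "e i \<noteq> 0" by auto
    thus ?thesis by (subst prod_zero) auto
  qed
  finally show ?thesis using M by (simp add: ct_def)
qed

lemma pw_mono:
  assumes w: "w permutes {..<n}"
  shows "pw n x b w = mon n (\<lambda>k. b (inv_into UNIV w k)) x"
proof -
  have "mon n (\<lambda>k. b (inv_into UNIV w k)) x = (\<Prod>k<n. x k powi b (inv_into UNIV w k))" by (simp add: mon_def)
  also have "\<dots> = (\<Prod>i<n. x (w i) powi b (inv_into UNIV w (w i)))"
    by (subst prod.permute[OF w]) (simp add: o_def)
  also have "\<dots> = pw n x b w" by (simp add: pw_def permutes_inverses(2)[OF w])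
  finally show ?thesis by simp
qed

lemma pw_mult:
  assumes w: "w permutes {..<n}" and v: "v permutes {..<n}" and g: "good_point n x"
  shows "pw n x b w * pw n x c v = pw n x (\<lambda>i. b i + c (inv_into UNIV v (w i))) w"
proof -
  have p: "inv_into UNIV v \<circ> w permutes {..<n}" by (rule permutes_compose[OF w permutes_inv[OF v]])
  have "pw n x c v = (\<Prod>i<n. x (v i) powi c i)" by (simp add: pw_def)
  also have "\<dots> = (\<Prod>k<n. x (v ((inv_into UNIV v \<circ> w) k)) powi c ((inv_into UNIV v \<circ> w) k))"
    by (subst prod.permute[OF p]) (simp add: o_def)
  also have "\<dots> = (\<Prod>k<n. x (w k) powi c (inv_into UNIV v (w k)))"
    by (simp add: permutes_inverses(1)[OF v])
  finally have "pw n x b w * pw n x c v = (\<Prod>i<n. x (w i) powi b i * x (w i) powi c (inv_into UNIV v (w i)))"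
    by (simp add: pw_def prod.distrib)
  also have "\<dots> = pw n x (\<lambda>i. b i + c (inv_into UNIV v (w i))) w"
    unfolding pw_def
  proof (rule prod.cong[OF refl])
    fix i assume "i \<in> {..<n}"
    hence "w i < n" using permutes_in_image[OF w] by simp
    hence "x (w i) \<noteq> 0" using g by (simp add: good_point_def)
    thus "x (w i) powi b i * x (w i) powi c (inv_into UNIV v (w i)) = x (w i) powi (b i + c (inv_into UNIV v (w i)))"
      by (simp add: power_int_add)
  qed
  finally show ?thesis .
qed



lemma ct_pw:
  assumes w: "w permutes {..<n}" and M: "M > 0" and e: "\<And>i. i < n \<Longrightarrow> \<bar>e i\<bar> < int M"
  shows "ct n M (\<lambda>x. pw n x e w) = (if \<forall>i<n. e i = 0 then 1 else 0)"
proof -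
  have iw: "\<And>k. k < n \<Longrightarrow> inv_into UNIV w k < n"
    using permutes_in_image[OF permutes_inv[OF w]] by simp
  have "ct n M (\<lambda>x. pw n x e w) = ct n M (mon n (\<lambda>k. e (inv_into UNIV w k)))"
    by (simp add: pw_mono[OF w])
  also have "\<dots> = (if \<forall>k<n. e (inv_into UNIV w k) = 0 then 1 else 0)"
    by (rule ct_mono[OF M]) (simp add: e iw)
  also have "(\<forall>k<n. e (inv_into UNIV w k) = 0) \<longleftrightarrow> (\<forall>i<n. e i = 0)"
  proof
    assume a: "\<forall>k<n. e (inv_into UNIV w k) = 0"
    show "\<forall>i<n. e i = 0"
    proof (intro allI impI)
      fix i assume "i < n"
      hence "w i < n" using permutes_in_image[OF w] by simp
      thus "e i = 0" using a permutes_inverses(2)[OF w, of i] by metis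
    qed
  qed (simp add: iw)
  finally show ?thesis .
qed

definition cnt :: "nat \<Rightarrow> (nat \<Rightarrow> int) \<Rightarrow> (nat \<Rightarrow> int) \<Rightarrow> complex" where
  "cnt n b c = (\<Sum>u | u permutes {..<n}. of_int (sign u) * (if \<forall>i<n. b i + c (u i) = 0 then 1 else 0))"

lemma perm_sum_shift:
  assumes w: "w permutes {..<n}"
  shows "(\<Sum>v | v permutes {..<n}. of_int (sign v) * (if \<forall>i<n. b i + c (inv_into UNIV v (w i)) = 0 then 1 else 0))
         = of_int (sign w) * cnt n b c"
proof -
  let ?P = "{v. v permutes {..<n}}"
  define f where "f v = (of_int (sign v) :: complex) * (if \<forall>i<n. b i + c (inv_into UNIV v (w i)) = 0 then 1 else 0)" for v
  have "sum f ?P = (\<Sum>v\<in>?P. f (inv_into UNIV v))" by (rule sum_permutations_inverse)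
  also have "\<dots> = (\<Sum>v\<in>?P. f (inv_into UNIV (v \<circ> inv_into UNIV w)))"
    by (rule sum_permutations_compose_right[OF permutes_inv[OF w]])
  also have "\<dots> = (\<Sum>v\<in>?P. of_int (sign w) * (of_int (sign v) * (if \<forall>i<n. b i + c (v i) = 0 then 1 else 0)))"
  proof (rule sum.cong[OF refl])
    fix v assume "v \<in> ?P"
    hence v: "v permutes {..<n}" by simp
    have iw: "inv_into UNIV w permutes {..<n}" by (rule permutes_inv[OF w])
    have vw: "v \<circ> inv_into UNIV w permutes {..<n}" by (rule permutes_compose[OF iw v])
    have ii: "inv_into UNIV (inv_into UNIV (v \<circ> inv_into UNIV w)) = v \<circ> inv_into UNIV w"
      by (rule permutes_inv_inv[OF vw])
    have s1: "sign (inv_into UNIV (v \<circ> inv_into UNIV w)) = sign (v \<circ> inv_into UNIV w)"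
      by (rule sign_inverse) (rule permutation_permutes[THEN iffD2], rule exI[of _ "{..<n}"], simp add: vw)
    have pv: "permutation v" using v permutation_permutes by blast
    have piw: "permutation (inv_into UNIV w)" using iw permutation_permutes by blast
    have pw': "permutation w" using w permutation_permutes by blast
    have s2: "sign (v \<circ> inv_into UNIV w) = sign v * sign w"
      using sign_compose[OF pv piw] sign_inverse[OF pw'] by simp
    have c: "(v \<circ> inv_into UNIV w) (w i) = v i" for i
      using permutes_inverses(2)[OF w] by simp
    show "f (inv_into UNIV (v \<circ> inv_into UNIV w)) = of_int (sign w) * (of_int (sign v) * (if \<forall>i<n. b i + c (v i) = 0 then 1 else 0))"
      unfolding f_def ii s1 s2 c by simp
  qed
  also have "\<dots> = of_int (sign w) * cnt n b c" by (simp add: cnt_def sum_distrib_left)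
  finally show ?thesis by (simp add: f_def)
qed

lemma ct_alt2:
  assumes M: "M > 0" and bb: "\<And>i. i < n \<Longrightarrow> \<bar>b i\<bar> \<le> B" and cb: "\<And>i. i < n \<Longrightarrow> \<bar>c i\<bar> \<le> B"
    and MB: "2 * B < int M"
  shows "ct n M (\<lambda>x. alt n b x * alt n c x) = of_nat (fact n) * cnt n b c"
proof -
  let ?P = "{v. v permutes {..<n}}"
  have fin: "finite ?P" by (simp add: finite_permutations)
  have "ct n M (\<lambda>x. alt n b x * alt n c x) =
        ct n M (\<lambda>x. \<Sum>w\<in>?P. \<Sum>v\<in>?P. (of_int (sign w) * of_int (sign v)) * pw n x (\<lambda>i. b i + c (inv_into UNIV v (w i))) w)"
  proof (rule ct_cong)
    fix x assume g: "good_point n x"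
    have "alt n b x * alt n c x = (\<Sum>w\<in>?P. \<Sum>v\<in>?P. (of_int (sign w) * pw n x b w) * (of_int (sign v) * pw n x c v))"
      by (simp add: alt_def sum_product)
    also have "\<dots> = (\<Sum>w\<in>?P. \<Sum>v\<in>?P. (of_int (sign w) * of_int (sign v)) * pw n x (\<lambda>i. b i + c (inv_into UNIV v (w i))) w)"
      by (intro sum.cong refl) (simp add: pw_mult[OF _ _ g, symmetric] algebra_simps)
    finally show "alt n b x * alt n c x = (\<Sum>w\<in>?P. \<Sum>v\<in>?P. (of_int (sign w) * of_int (sign v)) * pw n x (\<lambda>i. b i + c (inv_into UNIV v (w i))) w)" .
  qed
  also have "\<dots> = (\<Sum>w\<in>?P. \<Sum>v\<in>?P. (of_int (sign w) * of_int (sign v)) * (if \<forall>i<n. b i + c (inv_into UNIV v (w i)) = 0 then 1 else 0))"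
  proof -
    have "ct n M (\<lambda>x. pw n x (\<lambda>i. b i + c (inv_into UNIV v (w i))) w) = (if \<forall>i<n. b i + c (inv_into UNIV v (w i)) = 0 then 1 else 0)"
      if w: "w permutes {..<n}" and v: "v permutes {..<n}" for w v
    proof (rule ct_pw[OF w M])
      fix i assume i: "i < n"
      have "w i < n" using permutes_in_image[OF w] i by simp
      hence "inv_into UNIV v (w i) < n" using permutes_in_image[OF permutes_inv[OF v]] by simp
      hence "\<bar>c (inv_into UNIV v (w i))\<bar> \<le> B" by (rule cb)
      thus "\<bar>b i + c (inv_into UNIV v (w i))\<bar> < int M" using bb[OF i] MB by linarith
    qed
    thus ?thesis by (simp add: ct_sum fin ct_cmult)
  qed
  also have "\<dots> = (\<Sum>w\<in>?P. of_int (sign w) * (of_int (sign w) * cnt n b c))"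
  proof (rule sum.cong[OF refl])
    fix w assume "w \<in> ?P"
    hence w: "w permutes {..<n}" by simp
    show "(\<Sum>v\<in>?P. (of_int (sign w) * of_int (sign v)) * (if \<forall>i<n. b i + c (inv_into UNIV v (w i)) = 0 then 1 else 0)) =
          of_int (sign w) * (of_int (sign w) * cnt n b c)"
      by (subst perm_sum_shift[OF w, of b c, symmetric]) (simp add: sum_distrib_left mult.assoc)
  qed
  also have "\<dots> = (\<Sum>w\<in>?P. cnt n b c)"
    by (simp add: mult.assoc[symmetric] sign_sq)
  also have "\<dots> = of_nat (fact n) * cnt n b c"
    using card_permutations[of "{..<n}" n] by simp
  finally show ?thesis .
qed



definition rv :: "nat \<Rightarrow> nat \<Rightarrow> nat" where "rv n i = (if i < n then n - 1 - i else i)"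

lemma rv_rv[simp]: "rv n (rv n i) = i"
  by (simp add: rv_def)

lemma rv_perm: "rv n permutes {..<n}"
  unfolding permutes_def
proof (intro conjI allI impI)
  fix x assume "x \<notin> {..<n}" thus "rv n x = x" by (simp add: rv_def)
next
  fix y show "\<exists>!x. rv n x = y"
    by (rule ex1I[of _ "rv n y"]) (simp, metis rv_rv)
qed

lemma incr_perm_id:
  fixes q :: "nat \<Rightarrow> nat"
  assumes q: "q permutes {..<n}" and inc: "\<And>i j. i < j \<Longrightarrow> j < n \<Longrightarrow> q i < q j"
  shows "q = id"
proof (rule permutes_natset_ge[OF q])
  have "i < n \<longrightarrow> i \<le> q i" for i
  proof (induction i)
    case 0 show ?case by simp
  next
    case (Suc i)
    show ?case
    proof
      assume "Suc i < n"
      hence "q i < q (Suc i)" "i \<le> q i" using inc[of i "Suc i"] Suc by auto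
      thus "Suc i \<le> q (Suc i)" by simp
    qed
  qed
  thus "\<forall>i\<in>{..<n}. i \<le> q i" by simp
qed

definition sdec :: "nat \<Rightarrow> (nat \<Rightarrow> int) \<Rightarrow> bool" where
  "sdec n b \<longleftrightarrow> (\<forall>i j. i < j \<longrightarrow> j < n \<longrightarrow> b j < b i)"

lemma cnt_strict:
  assumes b: "sdec n b" and c: "sdec n c"
  shows "cnt n b c = (if \<forall>i<n. b i + c (rv n i) = 0 then of_int (sign (rv n)) else 0)"
proof -
  let ?P = "{u. u permutes {..<n}}"
  define f where "f u = (of_int (sign u) :: complex) * (if \<forall>i<n. b i + c (u i) = 0 then 1 else 0)" for u
  have only: "u = rv n" if u: "u permutes {..<n}" and cond: "\<forall>i<n. b i + c (u i) = 0" for u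
  proof -
    have ui: "\<And>i. i < n \<Longrightarrow> u i < n" using permutes_in_image[OF u] by simp
    have dec: "u j < u i" if ij: "i < j" "j < n" for i j
    proof (rule ccontr)
      assume "\<not> u j < u i"
      moreover have "u i \<noteq> u j" using permutes_inj[OF u] ij by (auto simp: inj_def)
      ultimately have "u i < u j" by simp
      hence "c (u j) < c (u i)" using c ui ij unfolding sdec_def by auto
      moreover have "b j < b i" using b ij unfolding sdec_def by auto
      moreover have "b i + c (u i) = 0" "b j + c (u j) = 0" using cond ij by auto
      ultimately show False by linarith
    qed
    have q: "rv n \<circ> u permutes {..<n}" by (rule permutes_compose[OF u rv_perm])
    have "rv n \<circ> u = id"
    proof (rule incr_perm_id[OF q])
      fix i j assume ij: "i < j" "j < n"
      thus "(rv n \<circ> u) i < (rv n \<circ> u) j" using dec[OF ij] ui[of i] ui[of j] by (auto simp: rv_def)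
    qed
    hence "\<And>i. rv n (u i) = i" by (metis comp_apply id_apply)
    hence "\<And>i. u i = rv n i" by (metis rv_rv)
    thus ?thesis by auto
  qed
  have "cnt n b c = sum f ?P" by (simp add: cnt_def f_def)
  also have "\<dots> = f (rv n) + sum f (?P - {rv n})"
    by (rule sum.remove) (auto simp: finite_permutations rv_perm)
  also have "sum f (?P - {rv n}) = 0"
    by (rule sum.neutral) (auto simp: f_def dest: only)
  finally show ?thesis by (simp add: f_def)
qed

lemma alt_shift:
  assumes g: "good_point n x"
  shows "alt n (\<lambda>i. b i + t) x = alt n b x * (\<Prod>k<n. x k powi t)"
proof -
  have "pw n x (\<lambda>i. b i + t) w = pw n x b w * (\<Prod>k<n. x k powi t)" if w: "w permutes {..<n}" for w
  proof -
    have "(\<Prod>k<n. x k powi t) = (\<Prod>i<n. x (w i) powi t)"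
      by (subst prod.permute[OF w]) (simp add: o_def)
    moreover have "x (w i) powi (b i + t) = x (w i) powi b i * x (w i) powi t" if "i < n" for i
    proof -
      have "w i < n" using permutes_in_image[OF w] that by simp
      hence "x (w i) \<noteq> 0" using g by (simp add: good_point_def)
      thus ?thesis by (simp add: power_int_add)
    qed
    ultimately show ?thesis by (simp add: pw_def prod.distrib[symmetric])
  qed
  thus ?thesis by (simp add: alt_def sum_distrib_right mult.assoc)
qed

lemma alt_sq: "alt n (\<lambda>i. 2 * b i) x = alt n b (\<lambda>i. x i ^ 2)"
  by (simp add: alt_def pw_def power_int_power)



lemma sdec_lam: "strict_decr n lam \<Longrightarrow> sdec n (\<lambda>i. lam ! i)"
  by (auto simp: strict_decr_def sdec_def sorted_wrt_iff_nth_less)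

lemma sdec_mu: "gen_partition n mu \<Longrightarrow> sdec n (\<lambda>i. mu ! i + dl n i)"
  unfolding gen_partition_def sdec_def dl_def
proof (intro allI impI)
  fix i j assume a: "length mu = n \<and> sorted_wrt (\<ge>) mu" and ij: "i < j" "j < n"
  hence "mu ! j \<le> mu ! i" by (auto simp: sorted_wrt_iff_nth_less)
  thus "mu ! j + (int n - 1 - int j) < mu ! i + (int n - 1 - int i)" using ij by simp
qed

lemma sdec_c0: "sdec n (\<lambda>i. - int i)" by (simp add: sdec_def)
lemma sdec_r2: "sdec n (\<lambda>i. int n - 1 - 2 * int i)" by (simp add: sdec_def)

lemma sign_rv_nz: "(of_int (sign (rv n)) :: complex) \<noteq> 0" by (simp add: sign_def)

lemma partB:
  assumes sd: "strict_decr n lam" and ex: "is_schur_expansion n lam g"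
  shows "g (replicate n 0) = (if lam = two_rho n then 1 else 0)"
proof -
  define S where "S = {mu. g mu \<noteq> 0}"
  have finS: "finite S" and gp: "\<And>mu. mu \<in> S \<Longrightarrow> gen_partition n mu"
    and eq: "\<And>x. good_point n x \<Longrightarrow> schur_P n lam x = (\<Sum>mu\<in>S. g mu * schur_s n mu x)"
    using ex by (auto simp: is_schur_expansion_def S_def)
  have lenlam: "length lam = n" using sd by (simp add: strict_decr_def)
  define c0 :: "nat \<Rightarrow> int" where "c0 i = - int i" for i
  define r2 :: "nat \<Rightarrow> int" where "r2 i = int n - 1 - 2 * int i" for i
  define bm where "bm mu i = mu ! i + dl n i" for mu :: "int list" and i
  define T where "T = (\<Sum>mu\<in>S. \<Sum>i<n. \<bar>mu ! i\<bar>)"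
  define B :: int where "B = T + (\<Sum>i<n. \<bar>lam ! i\<bar>) + 2 * int n + 1"
  define M where "M = nat (2 * B + 1)"
  have T0: "T \<ge> 0" unfolding T_def by (intro sum_nonneg) auto
  have L0: "(\<Sum>i<n. \<bar>lam ! i\<bar>) \<ge> 0" by (intro sum_nonneg) auto
  have B0: "B \<ge> 0" using T0 L0 by (simp add: B_def)
  have M: "M > 0" and MB: "2 * B < int M" using B0 by (auto simp: M_def)
  have muT: "\<bar>mu ! i\<bar> \<le> T" if "mu \<in> S" "i < n" for mu i
  proof -
    have "\<bar>mu ! i\<bar> \<le> (\<Sum>i<n. \<bar>mu ! i\<bar>)" by (rule member_le_sum) (use that in auto)
    also have "\<dots> \<le> T" unfolding T_def by (rule member_le_sum) (use that finS in \<open>auto intro: sum_nonneg\<close>)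
    finally show ?thesis .
  qed
  have lamB: "\<bar>lam ! i\<bar> \<le> B" if "i < n" for i
  proof -
    have "\<bar>lam ! i\<bar> \<le> (\<Sum>i<n. \<bar>lam ! i\<bar>)" by (rule member_le_sum) (use that in auto)
    thus ?thesis using T0 by (simp add: B_def)
  qed
  have bmB: "\<bar>bm mu i\<bar> \<le> B" if "mu \<in> S" "i < n" for mu i
  proof -
    have "mu ! i \<le> T" "- mu ! i \<le> T" using muT[OF that] by (simp_all add: abs_le_iff)
    moreover have "int i < int n" using that by simp
    ultimately show ?thesis unfolding bm_def dl_def B_def abs_le_iff using L0 by linarith
  qed
  have c0B: "\<bar>c0 i\<bar> \<le> B" if "i < n" for i
  proof -
    have "int i < int n" using that by simp
    thus ?thesis unfolding c0_def B_def using T0 L0 by linarith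
  qed
  have r2B: "\<bar>r2 i\<bar> \<le> B" if "i < n" for i
  proof -
    have "int i < int n" using that by simp
    thus ?thesis unfolding r2_def B_def abs_le_iff using T0 L0 by linarith
  qed
  define X where "X x = (\<Prod>k<n. x k powi (1 - int n))" for x :: "nat \<Rightarrow> complex"
  have ac0: "alt n c0 x = vd n x * X x" if g: "good_point n x" for x
  proof -
    have "c0 = (\<lambda>i. dl n i + (1 - int n))" by (auto simp: c0_def dl_def)
    hence "alt n c0 x = alt n (dl n) x * X x" using alt_shift[OF g, of "dl n" "1 - int n"] by (simp add: X_def)
    thus ?thesis by (simp add: alt_dl)
  qed
  have ar2: "alt n r2 x = ev n x * vd n x * X x" if g: "good_point n x" for x
  proof -
    have "r2 = (\<lambda>i. 2 * dl n i + (1 - int n))" by (auto simp: r2_def dl_def)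
    hence "alt n r2 x = alt n (\<lambda>i. 2 * dl n i) x * X x"
      using alt_shift[OF g, of "\<lambda>i. 2 * dl n i" "1 - int n"] by (simp add: X_def)
    also have "alt n (\<lambda>i. 2 * dl n i) x = ev n x * vd n x" by (simp add: alt_sq alt_dl ev_vd)
    finally show ?thesis .
  qed
  define F where "F x = schur_P n lam x * vd n x * alt n c0 x" for x
  have F1: "F x = alt n (\<lambda>i. lam ! i) x * alt n r2 x" if g: "good_point n x" for x
    using good_vd[OF g] by (simp add: F_def P_alt[OF g] ac0[OF g] ar2[OF g] field_simps)
  have F2: "F x = (\<Sum>mu\<in>S. g mu * (alt n (bm mu) x * alt n c0 x))" if g: "good_point n x" for x
  proof -
    have "F x = (\<Sum>mu\<in>S. g mu * (alt n (bm mu) x / vd n x)) * vd n x * alt n c0 x"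
    proof -
      have "\<And>mu. bm mu = (\<lambda>i. mu ! i + dl n i)" by (simp add: bm_def fun_eq_iff)
      thus ?thesis by (simp add: F_def eq[OF g] s_alt[OF g])
    qed
    also have "\<dots> = (\<Sum>mu\<in>S. g mu * (alt n (bm mu) x / vd n x) * (vd n x * alt n c0 x))"
      by (subst mult.assoc, rule sum_distrib_right)
    also have "\<dots> = (\<Sum>mu\<in>S. g mu * (alt n (bm mu) x * alt n c0 x))"
      using good_vd[OF g] by (intro sum.cong refl) (simp add: field_simps)
    finally show ?thesis .
  qed
  have "ct n M F = ct n M (\<lambda>x. alt n (\<lambda>i. lam ! i) x * alt n r2 x)" by (rule ct_cong) (rule F1)
  also have "\<dots> = of_nat (fact n) * cnt n (\<lambda>i. lam ! i) r2"
    by (rule ct_alt2[OF M _ _ MB]) (auto intro: lamB r2B)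
  also have "cnt n (\<lambda>i. lam ! i) r2 = (if lam = two_rho n then of_int (sign (rv n)) else 0)"
  proof -
    have "cnt n (\<lambda>i. lam ! i) r2 = (if \<forall>i<n. lam ! i + r2 (rv n i) = 0 then of_int (sign (rv n)) else 0)"
      by (rule cnt_strict[OF sdec_lam[OF sd]]) (simp add: r2_def sdec_def)
    also have "(\<forall>i<n. lam ! i + r2 (rv n i) = 0) \<longleftrightarrow> lam = two_rho n"
    proof
      assume a: "\<forall>i<n. lam ! i + r2 (rv n i) = 0"
      show "lam = two_rho n"
      proof (rule nth_equalityI)
        show "length lam = length (two_rho n)" by (simp add: lenlam two_rho_def)
        fix i assume "i < length lam"
        hence i: "i < n" by (simp add: lenlam)
        hence "lam ! i + r2 (rv n i) = 0" using a by simp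
        thus "lam ! i = two_rho n ! i" using i by (simp add: r2_def rv_def two_rho_def of_nat_diff)
      qed
    next
      assume "lam = two_rho n"
      thus "\<forall>i<n. lam ! i + r2 (rv n i) = 0" by (simp add: r2_def rv_def two_rho_def of_nat_diff)
    qed
    finally show ?thesis .
  qed
  finally have C1: "ct n M F = of_nat (fact n) * (if lam = two_rho n then of_int (sign (rv n)) else 0)" .
  have "ct n M F = ct n M (\<lambda>x. \<Sum>mu\<in>S. g mu * (alt n (bm mu) x * alt n c0 x))" by (rule ct_cong) (rule F2)
  also have "\<dots> = (\<Sum>mu\<in>S. g mu * (of_nat (fact n) * cnt n (bm mu) c0))"
  proof -
    have "ct n M (\<lambda>x. alt n (bm mu) x * alt n c0 x) = of_nat (fact n) * cnt n (bm mu) c0" if "mu \<in> S" for mu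
      by (rule ct_alt2[OF M _ _ MB]) (auto intro: bmB[OF that] c0B)
    thus ?thesis by (simp add: ct_sum[OF finS] ct_cmult)
  qed
  also have "\<dots> = (\<Sum>mu\<in>S. if mu = replicate n 0 then g mu * (of_nat (fact n) * of_int (sign (rv n))) else 0)"
  proof (rule sum.cong[OF refl])
    fix mu assume mS: "mu \<in> S"
    have gpm: "gen_partition n mu" by (rule gp[OF mS])
    hence lm: "length mu = n" by (simp add: gen_partition_def)
    have "cnt n (bm mu) c0 = (if \<forall>i<n. bm mu i + c0 (rv n i) = 0 then of_int (sign (rv n)) else 0)"
    proof (rule cnt_strict)
      have "bm mu = (\<lambda>i. mu ! i + dl n i)" by (simp add: bm_def fun_eq_iff)
      thus "sdec n (bm mu)" using sdec_mu[OF gpm] by simp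
      show "sdec n c0" by (simp add: c0_def sdec_def)
    qed
    also have "(\<forall>i<n. bm mu i + c0 (rv n i) = 0) \<longleftrightarrow> mu = replicate n 0"
    proof
      assume a: "\<forall>i<n. bm mu i + c0 (rv n i) = 0"
      show "mu = replicate n 0"
      proof (rule nth_equalityI)
        show "length mu = length (replicate n (0::int))" by (simp add: lm)
        fix i assume "i < length mu"
        hence i: "i < n" by (simp add: lm)
        hence "bm mu i + c0 (rv n i) = 0" using a by simp
        thus "mu ! i = replicate n 0 ! i" using i by (simp add: bm_def c0_def rv_def dl_def of_nat_diff)
      qed
    next
      assume "mu = replicate n 0"
      thus "\<forall>i<n. bm mu i + c0 (rv n i) = 0" by (simp add: bm_def c0_def rv_def dl_def of_nat_diff)
    qed
    finally show "g mu * (of_nat (fact n) * cnt n (bm mu) c0) =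
      (if mu = replicate n 0 then g mu * (of_nat (fact n) * of_int (sign (rv n))) else 0)" by simp
  qed
  also have "\<dots> = g (replicate n 0) * (of_nat (fact n) * of_int (sign (rv n)))"
    by (subst sum.delta[OF finS]) (auto simp: S_def)
  finally have C2: "ct n M F = g (replicate n 0) * (of_nat (fact n) * of_int (sign (rv n)))" .
  have nz: "(of_nat (fact n) :: complex) * of_int (sign (rv n)) \<noteq> 0" using sign_rv_nz by simp
  show ?thesis using C1 C2 nz by (cases "lam = two_rho n") auto
qed



lemma alt_cong: "(\<And>i. i < n \<Longrightarrow> b i = b' i) \<Longrightarrow> alt n b x = alt n b' x"
  unfolding alt_def pw_def by (intro sum.cong refl arg_cong2[where f="(*)"] prod.cong) auto

lemma alt_perm:
  assumes s: "s permutes {..<n}"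
  shows "alt n (b \<circ> s) x = of_int (sign s) * alt n b x"
proof -
  let ?P = "{w. w permutes {..<n}}"
  have isv: "inv_into UNIV s permutes {..<n}" by (rule permutes_inv[OF s])
  have pwe: "pw n x (b \<circ> s) w = pw n x b (w \<circ> inv_into UNIV s)" for w
  proof -
    have "pw n x (b \<circ> s) w = (\<Prod>i<n. x (w i) powi b (s i))" by (simp add: pw_def)
    also have "\<dots> = (\<Prod>k<n. x (w (inv_into UNIV s k)) powi b (s (inv_into UNIV s k)))"
      by (subst prod.permute[OF isv]) (simp add: o_def)
    also have "\<dots> = pw n x b (w \<circ> inv_into UNIV s)"
      by (simp add: pw_def permutes_inverses(1)[OF s])
    finally show ?thesis .
  qed
  have "alt n (b \<circ> s) x = (\<Sum>w\<in>?P. of_int (sign w) * pw n x b (w \<circ> inv_into UNIV s))"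
    by (simp add: alt_def pwe)
  also have "\<dots> = (\<Sum>w\<in>?P. of_int (sign (w \<circ> s)) * pw n x b (w \<circ> s \<circ> inv_into UNIV s))"
    by (rule sum_permutations_compose_right[OF s])
  also have "\<dots> = (\<Sum>w\<in>?P. of_int (sign s) * (of_int (sign w) * pw n x b w))"
  proof (rule sum.cong[OF refl])
    fix w assume "w \<in> ?P"
    hence w: "w permutes {..<n}" by simp
    have pw': "permutation w" "permutation s" using w s permutation_permutes by blast+
    have "w \<circ> s \<circ> inv_into UNIV s = w"
      using permutes_inverses(1)[OF s] by (auto simp: fun_eq_iff)
    thus "of_int (sign (w \<circ> s)) * pw n x b (w \<circ> s \<circ> inv_into UNIV s) = of_int (sign s) * (of_int (sign w) * pw n x b w)"
      by (simp add: sign_compose[OF pw'])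
  qed
  also have "\<dots> = of_int (sign s) * alt n b x" by (simp add: alt_def sum_distrib_left)
  finally show ?thesis .
qed

lemma sort_perm:
  fixes b :: "nat \<Rightarrow> int"
  obtains s where "s permutes {..<n}" "\<And>i j. i < j \<Longrightarrow> j < n \<Longrightarrow> b (s j) \<le> b (s i)"
proof -
  define L where "L = map b [0..<n]"
  define X where "X = rev (sort L)"
  have "mset X = mset L" by (simp add: X_def)
  then obtain p where p: "p permutes {..<length L}" "permute_list p L = X" by (rule mset_eq_permutation)
  have lL: "length L = n" by (simp add: L_def)
  have Xs: "sorted_wrt (\<ge>) X" by (simp add: X_def sorted_wrt_rev)
  have Xi: "X ! i = b (p i)" if "i < n" for i
  proof -
    have "p i < n" using permutes_in_image[OF p(1)] that lL by simp
    thus ?thesis using p that lL by (metis L_def add_0 diff_zero length_map nth_map nth_upt permute_list_nth)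
  qed
  show ?thesis
  proof (rule that)
    show "p permutes {..<n}" using p lL by simp
    fix i j assume ij: "i < j" "j < n"
    have "X ! j \<le> X ! i" using Xs ij lL by (auto simp: sorted_wrt_iff_nth_less X_def)
    thus "b (p j) \<le> b (p i)" using Xi ij by simp
  qed
qed

lemma strict_gap:
  fixes c :: "nat \<Rightarrow> int"
  assumes "\<And>k. Suc k < n \<Longrightarrow> c (Suc k) < c k"
  shows "i \<le> j \<Longrightarrow> j < n \<Longrightarrow> c j + (int j - int i) \<le> c i"
proof (induction j)
  case 0 thus ?case by simp
next
  case (Suc j)
  show ?case
  proof (cases "i = Suc j")
    case True thus ?thesis by simp
  next
    case False
    hence "i \<le> j" using Suc.prems by simp
    hence "c j + (int j - int i) \<le> c i" using Suc by simp
    moreover have "c (Suc j) < c j" using assms Suc.prems by simp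
    ultimately show ?thesis by simp
  qed
qed

lemma alt_expand:
  fixes b :: "nat \<Rightarrow> int"
  obtains e :: complex and mu where "gen_partition n mu"
    "\<And>x. alt n b x = e * alt n (\<lambda>i. mu ! i + dl n i) x"
proof -
  obtain s where s: "s permutes {..<n}" and sd: "\<And>i j. i < j \<Longrightarrow> j < n \<Longrightarrow> b (s j) \<le> b (s i)"
    using sort_perm[of n b] by blast
  define c where "c = b \<circ> s"
  have ac: "alt n c x = of_int (sign s) * alt n b x" for x by (simp add: c_def alt_perm[OF s])
  have ab: "alt n b x = of_int (sign s) * alt n c x" for x
    using ac[of x] by (simp add: mult.assoc[symmetric] sign_sq)
  show ?thesis
  proof (cases "\<forall>k. Suc k < n \<longrightarrow> c (Suc k) < c k")
    case True
    define mu where "mu = map (\<lambda>i. c i - dl n i) [0..<n]"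
    have gp: "gen_partition n mu"
      unfolding gen_partition_def sorted_wrt_iff_nth_less
    proof (intro conjI allI impI)
      show "length mu = n" by (simp add: mu_def)
      fix i j assume ij: "i < j" "j < length mu"
      hence "c j + (int j - int i) \<le> c i" using strict_gap[of n c i j] True by (simp add: mu_def)
      thus "mu ! j \<le> mu ! i" using ij by (simp add: mu_def dl_def)
    qed
    have "alt n b x = of_int (sign s) * alt n (\<lambda>i. mu ! i + dl n i) x" for x
    proof -
      have "alt n c x = alt n (\<lambda>i. mu ! i + dl n i) x"
        by (rule alt_cong) (simp add: mu_def)
      thus ?thesis by (simp add: ab)
    qed
    thus ?thesis using that[OF gp] by blast
  next
    case False
    then obtain k where k: "Suc k < n" "\<not> c (Suc k) < c k" by auto
    hence ck: "c (Suc k) = c k" using sd[of k "Suc k"] by (simp add: c_def)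
    define t where "t = Transposition.transpose k (Suc k)"
    have t: "t permutes {..<n}" unfolding t_def by (rule permutes_swap_id) (use k in auto)
    have ct: "c \<circ> t = c"
    proof
      fix i show "(c \<circ> t) i = c i"
        using ck by (cases "i = k"; cases "i = Suc k") (simp_all add: t_def)
    qed
    have "alt n c x = 0" for x
    proof -
      have "alt n c x = - alt n c x" using alt_perm[OF t, of c x] ct by (simp add: t_def sign_swap_id)
      thus ?thesis by simp
    qed
    hence "alt n b x = 0 * alt n (\<lambda>i. replicate n 0 ! i + dl n i) x" for x by (simp add: ab)
    moreover have "gen_partition n (replicate n 0)" by (simp add: gen_partition_def sorted_wrt_iff_nth_less)
    ultimately show ?thesis using that by blast
  qed
qed



definition PP :: "nat \<Rightarrow> (nat \<times> nat) set" where "PP n = (SIGMA i:{..<n}. {i<..<n})"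

definition al :: "nat \<Rightarrow> (nat \<times> nat) set \<Rightarrow> nat \<Rightarrow> nat" where
  "al n T k = card {p\<in>T. fst p = k} + card {p\<in>PP n - T. snd p = k}"

lemma finite_PP: "finite (PP n)" by (simp add: PP_def)

lemma prod_fiber:
  fixes y :: "nat \<Rightarrow> complex"
  assumes A: "finite A" and f: "f ` A \<subseteq> {..<n}"
  shows "(\<Prod>p\<in>A. y (f p)) = (\<Prod>k<n. y k ^ card {p\<in>A. f p = k})"
proof -
  have "(\<Prod>p\<in>A. y (f p)) = (\<Prod>k<n. \<Prod>p\<in>{p. p \<in> A \<and> f p = k}. y (f p))"
    by (rule prod.group[symmetric, OF A _ f]) simp
  also have "\<dots> = (\<Prod>k<n. y k ^ card {p\<in>A. f p = k})"
  proof (rule prod.cong[OF refl])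
    fix k
    have "(\<Prod>p\<in>{p. p \<in> A \<and> f p = k}. y (f p)) = (\<Prod>p\<in>{p. p \<in> A \<and> f p = k}. y k)"
      by (rule prod.cong) auto
    thus "(\<Prod>p\<in>{p. p \<in> A \<and> f p = k}. y (f p)) = y k ^ card {p\<in>A. f p = k}" by simp
  qed
  finally show ?thesis .
qed

lemma ev_expand: "ev n y = (\<Sum>T\<in>Pow (PP n). \<Prod>k<n. y k ^ al n T k)"
proof -
  have "ev n y = (\<Prod>p\<in>PP n. y (fst p) + y (snd p))"
    unfolding ev_def PP_def by (subst prod.Sigma) (auto simp: case_prod_beta)
  also have "\<dots> = (\<Sum>T\<in>Pow (PP n). (\<Prod>p\<in>T. y (fst p)) * (\<Prod>p\<in>PP n - T. y (snd p)))"
    by (rule prod_add[OF finite_PP])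
  also have "\<dots> = (\<Sum>T\<in>Pow (PP n). \<Prod>k<n. y k ^ al n T k)"
  proof (rule sum.cong[OF refl])
    fix T assume "T \<in> Pow (PP n)"
    hence T: "T \<subseteq> PP n" by simp
    have fT: "finite T" using T finite_PP finite_subset by blast
    have "(\<Prod>p\<in>T. y (fst p)) = (\<Prod>k<n. y k ^ card {p\<in>T. fst p = k})"
      by (rule prod_fiber[OF fT]) (use T in \<open>auto simp: PP_def\<close>)
    moreover have "(\<Prod>p\<in>PP n - T. y (snd p)) = (\<Prod>k<n. y k ^ card {p\<in>PP n - T. snd p = k})"
      by (rule prod_fiber) (auto simp: PP_def finite_PP)
    ultimately show "(\<Prod>p\<in>T. y (fst p)) * (\<Prod>p\<in>PP n - T. y (snd p)) = (\<Prod>k<n. y k ^ al n T k)"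
      by (simp add: al_def power_add prod.distrib)
  qed
  finally show ?thesis .
qed

lemma ev_alt:
  assumes g: "good_point n x"
  shows "ev n x * alt n b x = (\<Sum>T\<in>Pow (PP n). alt n (\<lambda>i. b i + int (al n T i)) x)"
proof -
  let ?P = "{w. w permutes {..<n}}"
  have "ev n x * alt n b x = (\<Sum>w\<in>?P. \<Sum>T\<in>Pow (PP n). of_int (sign w) * pw n x (\<lambda>i. b i + int (al n T i)) w)"
    unfolding alt_def sum_distrib_left
  proof (rule sum.cong[OF refl])
    fix w assume "w \<in> ?P"
    hence w: "w permutes {..<n}" by simp
    have "ev n x = ev n (x \<circ> w)" by (simp add: ev_perm[OF g w])
    also have "\<dots> = (\<Sum>T\<in>Pow (PP n). \<Prod>k<n. x (w k) ^ al n T k)" by (simp add: ev_expand)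
    finally have e: "ev n x = (\<Sum>T\<in>Pow (PP n). \<Prod>k<n. x (w k) ^ al n T k)" .
    have f: "pw n x b w * (\<Prod>k<n. x (w k) ^ al n T k) = pw n x (\<lambda>i. b i + int (al n T i)) w" for T
      unfolding pw_def prod.distrib[symmetric]
    proof (rule prod.cong[OF refl])
      fix k assume "k \<in> {..<n}"
      hence "w k < n" using permutes_in_image[OF w] by simp
      hence "x (w k) \<noteq> 0" using g by (simp add: good_point_def)
      thus "x (w k) powi b k * x (w k) ^ al n T k = x (w k) powi (b k + int (al n T k))"
        by (simp add: power_int_add power_int_of_nat)
    qed
    show "ev n x * (of_int (sign w) * pw n x b w) = (\<Sum>T\<in>Pow (PP n). of_int (sign w) * pw n x (\<lambda>i. b i + int (al n T i)) w)"
      unfolding e sum_distrib_right using f by (simp add: algebra_simps sum_distrib_left)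
  qed
  also have "\<dots> = (\<Sum>T\<in>Pow (PP n). alt n (\<lambda>i. b i + int (al n T i)) x)"
    by (subst sum.swap) (simp add: alt_def)
  finally show ?thesis .
qed

lemma existence: "\<exists>g. is_schur_expansion n lam g"
proof -
  define A where "A = Pow (PP n)"
  have finA: "finite A" by (simp add: A_def finite_PP)
  define bt where "bt T i = lam ! i + int (al n T i)" for T i
  have bteq: "\<And>T. bt T = (\<lambda>i. lam ! i + int (al n T i))" by (simp add: bt_def fun_eq_iff)
  have "\<forall>T. \<exists>q. gen_partition n (snd q) \<and> (\<forall>x. alt n (bt T) x = fst q * alt n (\<lambda>i. snd q ! i + dl n i) x)"
  proof
    fix T
    obtain e mu where "gen_partition n mu" "\<And>x. alt n (bt T) x = e * alt n (\<lambda>i. mu ! i + dl n i) x"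
      using alt_expand[of n "bt T"] by blast
    thus "\<exists>q. gen_partition n (snd q) \<and> (\<forall>x. alt n (bt T) x = fst q * alt n (\<lambda>i. snd q ! i + dl n i) x)"
      by (intro exI[of _ "(e, mu)"]) simp
  qed
  then obtain Q where Q: "\<And>T. gen_partition n (snd (Q T))"
    "\<And>T x. alt n (bt T) x = fst (Q T) * alt n (\<lambda>i. snd (Q T) ! i + dl n i) x"
    by metis
  define E where "E T = fst (Q T)" for T
  define U where "U T = snd (Q T)" for T
  define g where "g mu = (\<Sum>T\<in>{T\<in>A. U T = mu}. E T)" for mu
  have supp: "{mu. g mu \<noteq> 0} \<subseteq> U ` A"
  proof
    fix mu assume "mu \<in> {mu. g mu \<noteq> 0}"
    hence "sum E {T\<in>A. U T = mu} \<noteq> 0" by (simp add: g_def)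
    hence "{T\<in>A. U T = mu} \<noteq> {}" by (metis sum.empty)
    thus "mu \<in> U ` A" by auto
  qed
  have fin: "finite {mu. g mu \<noteq> 0}" by (rule finite_subset[OF supp]) (simp add: finA)
  have gp: "gen_partition n mu" if "g mu \<noteq> 0" for mu
    using supp that Q(1) by (auto simp: U_def)
  have eq: "schur_P n lam x = (\<Sum>mu | g mu \<noteq> 0. g mu * schur_s n mu x)" if gx: "good_point n x" for x
  proof -
    have vz: "vd n x \<noteq> 0" by (rule good_vd[OF gx])
    have "schur_P n lam x = (ev n x * alt n (\<lambda>i. lam ! i) x) / vd n x" by (simp add: P_alt[OF gx])
    also have "\<dots> = (\<Sum>T\<in>A. alt n (bt T) x) / vd n x" by (simp add: ev_alt[OF gx] A_def bteq)
    also have "\<dots> = (\<Sum>T\<in>A. E T * schur_s n (U T) x)"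
      by (simp add: sum_divide_distrib Q(2) s_alt[OF gx] E_def U_def)
    also have "\<dots> = (\<Sum>mu\<in>U ` A. \<Sum>T\<in>{T. T \<in> A \<and> U T = mu}. E T * schur_s n (U T) x)"
      by (rule sum.group[symmetric, OF finA]) (simp_all add: finA)
    also have "\<dots> = (\<Sum>mu\<in>U ` A. g mu * schur_s n mu x)"
      by (intro sum.cong refl) (auto simp: g_def sum_distrib_right)
    also have "\<dots> = (\<Sum>mu | g mu \<noteq> 0. g mu * schur_s n mu x)"
      by (rule sum.mono_neutral_right) (use supp finA in auto)
    finally show ?thesis .
  qed
  have "is_schur_expansion n lam g"
    unfolding is_schur_expansion_def using fin gp eq by blast
  thus ?thesis by blast
qed


theorem lemma3p6:
  fixes n :: nat and lam :: "int list"
  assumes "strict_decr n lam"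
  shows "(\<exists>g. is_schur_expansion n lam g) \<and>
         (\<forall>g. is_schur_expansion n lam g \<longrightarrow>
              g (replicate n 0) = (if lam = two_rho n then 1 else 0))"
  using existence partB[OF assms] by blast

end
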